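(* Let $f\in\mathrm{Homeo}_+(\mathbb{R})$ satisfy $f(x+1)=f(x)+2$ for all $x$ and $f(0)=0$, and let $\theta_f$ be defined on $PL_2(\mathbb{R})$ as in the context. Then $\theta_f:PL_2(\mathbb{R})\to\mathrm{Homeo}_+(\mathbb{R})$ is a group homomorphism.
   Context: $\mathbb{Q}_2$ denotes the dyadic rationals. $GA(\mathbb{Q}_2)$ is the group of affine maps $x\mapsto 2^nx+r$ ($n\in\mathbb{Z}$, $r\in\mathbb{Q}_2$); $T_r(x)=x+r$, $D(x)=2x$. There is a unique injective homomorphism $\theta_f:GA(\mathbb{Q}_2)\to\mathrm{Homeo}_+(\mathbb{R})$ with $\theta_f(T_1)=T_1$, $\theta_f(D)=f$. For $r=p/2^q\in\mathbb{Q}_2$ put $\bar r=f^{-q}(p)$ (well defined, strictly increasing). $PL_2(\mathbb{R})$ is the group of homeomorphisms $h$ of $\mathbb{R}$ that are piecewise linear with a locally finite set of break points, all in $\mathbb{Q}_2$, such that near each non-break point $h$ agrees with an element of $GA(\mathbb{Q}_2)$. For $h\in PL_2(\mathbb{R})$ choose a strictly increasing sequence $(x_n)_{n\in\mathbb{Z}}$ in $\mathbb{Q}_2$ with $x_n\to\pm\infty$ as $n\to\pm\infty$ and $\gamma_n\in GA(\mathbb{Q}_2)$ with $h=\gamma_n$ on $[x_n,x_{n+1}]$, and define $\theta_f(h)(t)=\theta_f(\gamma_n)(t)$ for $t\in[\bar x_n,\bar x_{n+1})$; this is independent of the choices and yields an increasing homeomorphism of $\mathbb{R}$. *)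

theory Defs
  imports "HOL-Analysis.Analysis"
begin

definition dyadic :: "real \<Rightarrow> bool" where
  "dyadic r \<longleftrightarrow> (\<exists>(p::int) (q::nat). r = real_of_int p / 2 ^ q)"

definition dyrep :: "real \<Rightarrow> int \<times> nat" where
  "dyrep r = (SOME (p, q). r = real_of_int p / 2 ^ q)"

definition fpow :: "(real \<Rightarrow> real) \<Rightarrow> int \<Rightarrow> real \<Rightarrow> real" where
  "fpow f n = (if 0 \<le> n then f ^^ nat n else (inv f) ^^ nat (- n))"

definition HomeoPlus :: "(real \<Rightarrow> real) set" where
  "HomeoPlus = {h. (\<exists>g. homeomorphism UNIV UNIV h g) \<and> strict_mono h}"

text \<open>Elements of GA(Q_2): a pair (n, r) codes x |-> 2^n x + r, r dyadic.\<close>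
definition GA :: "(int \<times> real) set" where
  "GA = {(n, r). dyadic r}"

definition GA_app :: "int \<times> real \<Rightarrow> real \<Rightarrow> real" where
  "GA_app g x = 2 powi (fst g) * x + snd g"

text \<open>theta_f on GA(Q_2): theta_f(T_1) = T_1, theta_f(D) = f; hence
  theta_f(T_r o D^n) = theta_f(D^-q o T_p o D^q) o f^n = f^-q o T_p o f^q o f^n for r = p/2^q.\<close>
definition theta_GA :: "(real \<Rightarrow> real) \<Rightarrow> int \<times> real \<Rightarrow> real \<Rightarrow> real" where
  "theta_GA f g t =
     (case dyrep (snd g) of (p, q) \<Rightarrow>
        fpow f (- int q) (fpow f (int q) (fpow f (fst g) t) + real_of_int p))"

definition dybar :: "(real \<Rightarrow> real) \<Rightarrow> real \<Rightarrow> real" where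
  "dybar f r = (case dyrep r of (p, q) \<Rightarrow> fpow f (- int q) (real_of_int p))"

definition PL2 :: "(real \<Rightarrow> real) set" where
  "PL2 = {h. (\<exists>g. homeomorphism UNIV UNIV h g) \<and>
              (\<exists>B. (\<forall>b\<in>B. dyadic b) \<and> (\<forall>a c. finite (B \<inter> {a..c})) \<and>
                   (\<forall>x. x \<notin> B \<longrightarrow>
                      (\<exists>\<gamma>\<in>GA. \<exists>e>0. \<forall>y\<in>ball x e. h y = GA_app \<gamma> y)))}"

definition PL_data :: "(real \<Rightarrow> real) \<Rightarrow> (int \<Rightarrow> real) \<Rightarrow> (int \<Rightarrow> int \<times> real) \<Rightarrow> bool" where
  "PL_data h xs gs \<longleftrightarrow> strict_mono xs \<and> (\<forall>n. dyadic (xs n)) \<and>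
     filterlim xs at_top at_top \<and> filterlim xs at_bot at_bot \<and>
     (\<forall>n. gs n \<in> GA) \<and>
     (\<forall>n. \<forall>y\<in>{xs n..xs (n + 1)}. h y = GA_app (gs n) y)"

definition theta_PL :: "(real \<Rightarrow> real) \<Rightarrow> (real \<Rightarrow> real) \<Rightarrow> real \<Rightarrow> real" where
  "theta_PL f h t =
     (case (SOME d. PL_data h (fst d) (snd d)) of (xs, gs) \<Rightarrow>
        theta_GA f (gs (SOME n. dybar f (xs n) \<le> t \<and> t < dybar f (xs (n + 1)))) t)"

end

theory Submission
  imports Defs
begin



lemma int_succ_strict_mono:
  fixes a :: "int \<Rightarrow> 'b::order"
  assumes "\<And>k. a k < a (k+1)" shows "strict_mono a"
proof (rule strict_monoI)
  fix m n :: int assume "m < n"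
  then obtain j where n: "n = m + int (Suc j)" by (metis less_imp_Suc_add zless_iff_Suc_zadd)
  have "a m < a (m + int (Suc j))" for j
    by (induction j) (auto intro: order.strict_trans assms[THEN order.strict_trans2] simp: add.assoc
       dest: order.strict_trans[OF _ assms])
  then show "a m < a n" using n by simp
qed

locale setting =
  fixes f :: "real \<Rightarrow> real"
  assumes fH: "f \<in> HomeoPlus" and f1: "\<And>x. f (x + 1) = f x + 2" and f0: "f 0 = 0"
begin

abbreviation F where "F \<equiv> fpow f"

lemma f_homeo: obtains g where "homeomorphism UNIV UNIV f g" "strict_mono f"
  using fH unfolding HomeoPlus_def by blast

lemma f_bij: "bij f"
  using f_homeo by (metis bij_betw_def homeomorphism_imp_open_map  homeomorphism_def inj_on_inverseI surj_def UNIV_I)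

lemma f_inv1 [simp]: "f (inv f x) = x" using f_bij by (simp add: bij_is_surj surj_f_inv_f)
lemma f_inv2 [simp]: "inv f (f x) = x" using f_bij by (simp add: bij_is_inj)

lemma f_sm: "strict_mono f" using f_homeo by blast
lemma finv_sm: "strict_mono (inv f)"
  by (metis f_inv1 f_sm strict_monoI strict_mono_less not_less_iff_gr_or_eq)

lemma f_cont: "continuous_on UNIV f"
  using f_homeo by (metis homeomorphism_def)
lemma finv_cont: "continuous_on UNIV (inv f)"
proof -
  obtain g where h: "homeomorphism UNIV UNIV f g" using f_homeo by blast
  then have "g = inv f" by (metis ext f_inv2 homeomorphism_def UNIV_I)
  then show ?thesis using h by (metis homeomorphism_def)
qed

lemma F_succ: "F (n+1) = f \<circ> F n"
proof (cases "n \<ge> 0")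
  case True
  then have "nat (n+1) = Suc (nat n)" by simp
  then show ?thesis using True by (simp add: fpow_def)
next
  case False
  show ?thesis
  proof (cases "n = -1")
    case True then show ?thesis by (auto simp: fpow_def fun_eq_iff)
  next
    case F: False
    then have "nat (-n) = Suc (nat (-(n+1)))" using False by simp
    then show ?thesis using False F by (simp add: fpow_def fun_eq_iff)
  qed
qed

lemma F_pred: "F (n - 1) = inv f \<circ> F n"
  using F_succ[of "n-1"] by (auto simp: fun_eq_iff)

lemma F_0 [simp]: "F 0 = id" by (simp add: fpow_def)

lemma F_add: "F (m + n) x = F m (F n x)"
proof (induction m rule: int_induct[where k=0])
  case base then show ?case by simp
next
  case (step1 i) then show ?case using F_succ[of "i+n"] F_succ[of i] by (simp add: algebra_simps)
next
  case (step2 i) then show ?case using F_pred[of "i+n"] F_pred[of i] by (simp add: algebra_simps)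
qed

lemma F_inv1 [simp]: "F n (F (-n) x) = x" using F_add[of n "-n" x] by simp
lemma F_inv2 [simp]: "F (-n) (F n x) = x" using F_add[of "-n" n x] by simp

lemma F_1: "F 1 = f" using F_succ[of 0] by simp

lemma F_sm: "strict_mono (F n)"
proof (induction n rule: int_induct[where k=0])
  case base then show ?case by (simp add: strict_mono_def)
next
  case (step1 i) then show ?case using F_succ[of i] f_sm by (simp add: strict_mono_def)
next
  case (step2 i) then show ?case using F_pred[of i] finv_sm by (simp add: strict_mono_def)
qed

lemma F_less_iff [simp]: "F n x < F n y \<longleftrightarrow> x < y"
  using F_sm strict_mono_less by blast
lemma F_le_iff [simp]: "F n x \<le> F n y \<longleftrightarrow> x \<le> y"
  using F_sm strict_mono_less_eq by blast
lemma F_eq_iff [simp]: "F n x = F n y \<longleftrightarrow> x = y"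
  using F_sm strict_mono_eq by blast

lemma F_cont: "continuous_on UNIV (F n)"
proof (induction n rule: int_induct[where k=0])
  case base then show ?case by (simp add: id_def)
next
  case (step1 i) then show ?case using F_succ[of i] f_cont
    by (metis continuous_on_compose continuous_on_subset top_greatest)
next
  case (step2 i) then show ?case using F_pred[of i] finv_cont
    by (metis continuous_on_compose continuous_on_subset top_greatest)
qed

lemma f_int: "f (x + of_int k) = f x + 2 * of_int k"
proof (induction k rule: int_induct[where k=0])
  case base then show ?case by simp
next
  case (step1 i) then show ?case using f1[of "x + of_int i"] by (simp add: algebra_simps)
next
  case (step2 i) then show ?case using f1[of "x + of_int (i - 1)"] by (simp add: algebra_simps)
qed

lemma F_nat_int: "F (int n) (x + of_int k) = F (int n) x + 2^n * of_int k"
proof (induction n arbitrary: x k)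
  case 0 then show ?case by simp
next
  case (Suc n)
  have e: "F (int (Suc n)) = f \<circ> F (int n)" using F_succ[of "int n"] by (simp add: add.commute)
  have "F (int (Suc n)) (x + of_int k) = f (F (int n) x + of_int (2^n * k))"
    using e Suc by simp
  also have "\<dots> = F (int (Suc n)) x + 2^Suc n * of_int k"
    using f_int[of "F (int n) x" "2^n*k"] e by simp
  finally show ?case .
qed

lemma F_neg_int: "F (- int n) (y + 2^n * of_int k) = F (- int n) y + of_int k"
proof -
  have "F (int n) (F (- int n) y + of_int k) = y + 2^n * of_int k" using F_nat_int by simp
  then show ?thesis by (metis F_inv2)
qed

lemma finv0: "inv f 0 = 0" by (metis f0 f_inv2)

lemma F_zero [simp]: "F n 0 = 0"
proof (induction n rule: int_induct[where k=0])
  case base then show ?case by simp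
next
  case (step1 i) then show ?case using F_succ[of i] f0 by simp
next
  case (step2 i) then show ?case using F_pred[of i] finv0 by simp
qed

end



lemma dyrep_ok: "dyadic r \<Longrightarrow> r = of_int (fst (dyrep r)) / 2 ^ snd (dyrep r)"
  unfolding dyadic_def dyrep_def
  by (rule someI2_ex) (auto simp: case_prod_beta)

lemma dyadic_rep: "dyadic (of_int p / 2^q)" unfolding dyadic_def by blast

lemma rep_lift: "(of_int p / 2^q :: real) = of_int (p * 2^j) / 2^(q+j)"
  by (simp add: power_add)

lemma rep_int_eq: "(of_int p / 2^q :: real) = of_int p' / 2^q \<Longrightarrow> p = p'"
  by simp

lemma common_rep:
  assumes "dyadic r" "dyadic s"
  shows "\<exists>p p' q. r = of_int p / 2^q \<and> s = of_int p' / 2^q"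
proof -
  obtain p q p' q' where r: "r = of_int p / 2^q" and s: "s = of_int p' / 2^q'"
    using assms unfolding dyadic_def by blast
  show ?thesis
    using rep_lift[of p q q'] rep_lift[of p' q' q] r s by (metis add.commute)
qed

lemma dyadic_int [simp]: "dyadic (of_int k)"
  using dyadic_rep[of k 0] by simp

lemma dyadic_add: "dyadic r \<Longrightarrow> dyadic s \<Longrightarrow> dyadic (r + s)"
  using common_rep[of r s] unfolding dyadic_def
  by (metis add_divide_distrib of_int_add)

lemma dyadic_uminus: "dyadic r \<Longrightarrow> dyadic (- r)"
  unfolding dyadic_def by (metis minus_divide_left of_int_minus)

lemma dyadic_diff: "dyadic r \<Longrightarrow> dyadic s \<Longrightarrow> dyadic (r - s)"
  using dyadic_add dyadic_uminus by (metis diff_conv_add_uminus)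

lemma dyadic_powi: assumes "dyadic r" shows "dyadic (2 powi n * r)"
proof -
  obtain p q where r: "r = of_int p / 2^q" using assms unfolding dyadic_def by blast
  show ?thesis
  proof (cases "n \<ge> 0")
    case True
    then have "2 powi n * r = of_int (2^nat n * p) / 2^q"
      using r by (simp add: power_int_def)
    then show ?thesis by (metis dyadic_rep)
  next
    case False
    then have "2 powi n * r = of_int p / 2^(q + nat (-n))"
      using r by (simp add: power_int_def power_add field_simps)
    then show ?thesis by (metis dyadic_rep)
  qed
qed


context setting begin

definition tau :: "real \<Rightarrow> real \<Rightarrow> real" where
  "tau r t = (case dyrep r of (p, q) \<Rightarrow> F (- int q) (F (int q) t + of_int p))"

lemma theta_GA_eq: "theta_GA f g t = tau (snd g) (F (fst g) t)"
  unfolding theta_GA_def tau_def by simp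

lemma dybar_eq: "dybar f r = tau r 0"
  unfolding dybar_def tau_def by (simp add: case_prod_beta)

lemma rep_aux: "F (- int (q+j)) (F (int (q+j)) t + 2^j * of_int p) = F (- int q) (F (int q) t + of_int p)"
proof -
  have "F (int (q+j)) t = F (int j) (F (int q) t)" using F_add[of "int j" "int q" t] by (simp add: add.commute)
  then have "F (int (q+j)) t + 2^j * of_int p = F (int j) (F (int q) t + of_int p)"
    using F_nat_int by simp
  moreover have "F (- int (q+j)) (F (int j) z) = F (- int q) z" for z
    using F_add[of "- int (q+j)" "int j" z] by simp
  ultimately show ?thesis by simp
qed

lemma rep_indep:
  assumes "(of_int p / 2^q :: real) = of_int p' / 2^q'"
  shows "F (- int q) (F (int q) t + of_int p) = F (- int q') (F (int q') t + of_int p')"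
proof -
  have "real_of_int (p * 2^q') = real_of_int (p' * 2^q)"
    using assms by (simp add: field_simps)
  then have "p * 2^q' = p' * 2^q" by (simp only: of_int_eq_iff)
  then have "F (- int (q+q')) (F (int (q+q')) t + 2^q' * of_int p) =
             F (- int (q'+q)) (F (int (q'+q)) t + 2^q * of_int p')"
    by (simp add: add.commute mult.commute)
       (metis (mono_tags, opaque_lifting) of_int_mult of_int_numeral of_int_power)
  then show ?thesis using rep_aux[of q q' t p] rep_aux[of q' q t p'] by simp
qed

lemma tau_rep: assumes "r = of_int p / 2^q" shows "tau r t = F (- int q) (F (int q) t + of_int p)"
proof -
  obtain P Q where d: "dyrep r = (P, Q)" by fastforce
  have "r = of_int P / 2^Q" using dyrep_ok[of r] dyadic_rep[of p q] assms d by simp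
  then have e: "(of_int P / 2^Q :: real) = of_int p / 2^q" using assms by simp
  show ?thesis unfolding tau_def d using rep_indep[OF e] by simp
qed

lemma tau_add:
  assumes "dyadic r" "dyadic s"
  shows "tau r (tau s t) = tau (r + s) t"
proof -
  obtain p p' q where r: "r = of_int p / 2^q" and s: "s = of_int p' / 2^q"
    using common_rep assms by blast
  have "r + s = of_int (p' + p) / 2^q" using r s by (simp add: add_divide_distrib)
  then have "tau (r+s) t = F (- int q) (F (int q) t + of_int (p' + p))" by (rule tau_rep)
  moreover have "tau r (tau s t) = F (- int q) (F (int q) (F (- int q) (F (int q) t + of_int p')) + of_int p)"
    using tau_rep[OF r] tau_rep[OF s] by simp
  ultimately show ?thesis by (simp add: add.assoc)
qed

lemma tau_F:
  assumes "dyadic r"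
  shows "F n (tau r t) = tau (2 powi n * r) (F n t)"
proof -
  obtain p q where r: "r = of_int p / 2^q" using assms unfolding dyadic_def by blast
  define Q where "Q = q + nat \<bar>n\<bar>"
  define P where "P = p * 2 ^ nat \<bar>n\<bar>"
  have r2: "r = of_int P / 2^Q" using r rep_lift[of p q "nat \<bar>n\<bar>"] by (simp add: P_def Q_def)
  define Q' where "Q' = nat (int Q - n)"
  have Q': "int Q' = int Q - n" unfolding Q'_def Q_def by simp
  have "F n (tau r t) = F n (F (- int Q) (F (int Q) t + of_int P))" using tau_rep[OF r2] by simp
  also have "\<dots> = F (- int Q') (F (int Q) t + of_int P)"
  proof -
    have e: "n + - int Q = - int Q'" using Q' by simp
    show ?thesis by (simp only: F_add[symmetric] e)
  qed
  also have "F (int Q) t = F (int Q') (F n t)" using F_add[of "int Q'" n t] Q' by simp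
  also have "F (- int Q') (F (int Q') (F n t) + of_int P) = tau (of_int P / 2^Q') (F n t)"
    using tau_rep[of "of_int P / 2^Q'" P Q'] by simp
  also have "of_int P / 2^Q' = 2 powi n * r"
  proof -
    have "(2::real) powi n * 2 powi (int Q') = 2 powi (n + int Q')"
      using power_int_add[of "2::real" n "int Q'"] by simp
    also have "n + int Q' = int Q" using Q' by simp
    finally have "(2::real) powi n * 2 ^ Q' = 2 ^ Q" by simp
    then have "2 powi n * (of_int P / 2^Q) = 2 powi n * (of_int P / (2 powi n * (2::real) ^ Q'))" by simp
    also have "\<dots> = of_int P / 2^Q'" by (simp add: divide_simps)
    finally show ?thesis using r2 by simp
  qed
  finally show ?thesis .
qed

lemma dybar_int [simp]: "dybar f (of_int k) = of_int k"
  using tau_rep[of "of_int k" k 0 0] by (simp add: dybar_eq)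

lemma dybar_less:
  assumes "dyadic x" "dyadic y" "x < y" shows "dybar f x < dybar f y"
proof -
  obtain p p' q where r: "x = of_int p / 2^q" and s: "y = of_int p' / 2^q"
    using common_rep assms by blast
  then have "p < p'" using assms by (simp add: divide_less_cancel)
  then show ?thesis using tau_rep[OF r, of 0] tau_rep[OF s, of 0] by (simp add: dybar_eq)
qed

lemma dybar_le_iff:
  assumes "dyadic x" "dyadic y" shows "dybar f x \<le> dybar f y \<longleftrightarrow> x \<le> y"
  using dybar_less assms by (metis linorder_not_le order_less_imp_le order.eq_iff)

lemma dybar_less_iff:
  assumes "dyadic x" "dyadic y" shows "dybar f x < dybar f y \<longleftrightarrow> x < y"
  using dybar_less assms by (metis linorder_not_le order_less_imp_le order.eq_iff)

lemma dybar_eq_iff: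
  assumes "dyadic x" "dyadic y" shows "dybar f x = dybar f y \<longleftrightarrow> x = y"
  using dybar_le_iff assms by (metis order.eq_iff)

lemma dybar_floor: "dyadic x \<Longrightarrow> of_int \<lfloor>x\<rfloor> \<le> dybar f x"
  using dybar_le_iff[of "of_int \<lfloor>x\<rfloor>" x] by simp

lemma dybar_ceil: "dyadic x \<Longrightarrow> dybar f x \<le> of_int \<lceil>x\<rceil>"
  using dybar_le_iff[of x "of_int \<lceil>x\<rceil>"] by simp

lemma tau_sm: "strict_mono (tau r)"
  unfolding tau_def by (auto simp: strict_mono_def case_prod_beta)

lemma tau_cont: "continuous_on UNIV (tau r)"
proof -
  have "continuous_on UNIV (F a \<circ> ((\<lambda>y. y + c) \<circ> F b))" for a b c
    by (intro continuous_on_compose) (auto intro: continuous_on_subset[OF F_cont] continuous_intros)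
  then have "continuous_on UNIV (\<lambda>t. F (- int q) (F (int q) t + c))" for q c
    by (simp add: o_def)
  then show ?thesis unfolding tau_def by (simp add: case_prod_beta)
qed

end



definition ga_comp :: "int \<times> real \<Rightarrow> int \<times> real \<Rightarrow> int \<times> real" where
  "ga_comp g h = (fst g + fst h, 2 powi fst g * snd h + snd g)"

definition ga_inv :: "int \<times> real \<Rightarrow> int \<times> real" where
  "ga_inv g = (- fst g, - (2 powi (- fst g) * snd g))"

lemma ga_comp_app: "GA_app (ga_comp g h) x = GA_app g (GA_app h x)"
  unfolding ga_comp_def GA_app_def by (simp add: power_int_add algebra_simps)

lemma ga_comp_GA: "g \<in> GA \<Longrightarrow> h \<in> GA \<Longrightarrow> ga_comp g h \<in> GA"
  unfolding ga_comp_def GA_def by (auto intro!: dyadic_add dyadic_powi)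

lemma ga_inv_GA: "g \<in> GA \<Longrightarrow> ga_inv g \<in> GA"
  unfolding ga_inv_def GA_def by (auto intro!: dyadic_uminus dyadic_powi)

lemma pos2powi: "(2::real) powi n > 0" by simp

lemma ga_inv_app1: "GA_app (ga_inv g) (GA_app g x) = x"
  unfolding ga_inv_def GA_app_def
  by (simp add: algebra_simps power_int_minus)

lemma ga_inv_app2: "GA_app g (GA_app (ga_inv g) x) = x"
  unfolding ga_inv_def GA_app_def
  by (simp add: algebra_simps power_int_minus)

lemma GA_app_less_iff [simp]: "GA_app g x < GA_app g y \<longleftrightarrow> x < y"
  unfolding GA_app_def by simp
lemma GA_app_le_iff [simp]: "GA_app g x \<le> GA_app g y \<longleftrightarrow> x \<le> y"
  unfolding GA_app_def by simp

lemma GA_app_dyadic: "g \<in> GA \<Longrightarrow> dyadic x \<Longrightarrow> dyadic (GA_app g x)"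
  unfolding GA_app_def GA_def by (auto intro: dyadic_add dyadic_powi)

lemma GA_app_cont: "continuous_on S (GA_app g)"
  unfolding GA_app_def by (intro continuous_intros)

lemma GA_eq:
  assumes "GA_app g a = GA_app h a" "GA_app g b = GA_app h b" "a < b"
  shows "g = h"
proof -
  obtain n r m s where g: "g = (n, r)" and h: "h = (m, s)" by fastforce
  have "2 powi n * (b - a) = (2::real) powi m * (b - a)"
    using assms unfolding g h GA_app_def by (simp add: algebra_simps)
  then have e: "(2::real) powi n = 2 powi m" using assms by simp
  have "n = m"
  proof (rule ccontr)
    assume "n \<noteq> m"
    then consider "n < m" | "m < n" by linarith
    then show False using e power_int_strict_increasing[of n m "2::real"]
      power_int_strict_increasing[of m n "2::real"] by cases auto
  qed
  then show ?thesis using assms(1) unfolding g h GA_app_def by simp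
qed

lemma smono_surj_cont:
  fixes g :: "real \<Rightarrow> real"
  assumes "strict_mono g" "surj g"
  shows "continuous_on UNIV g"
  by (rule continuous_onI_mono) (use assms in \<open>auto simp: strict_mono_less_eq\<close>)

lemma smono_surj_homeo:
  fixes g :: "real \<Rightarrow> real"
  assumes "strict_mono g" "surj g"
  shows "g \<in> HomeoPlus"
proof -
  have bij: "bij g" using assms strict_mono_imp_inj_on bij_def by blast
  have i1: "inv g (g x) = x" for x using bij by (simp add: bij_is_inj)
  have i2: "g (inv g y) = y" for y using bij by (simp add: bij_is_surj surj_f_inv_f)
  have sm: "strict_mono (inv g)"
  proof (rule strict_monoI)
    fix x y :: real assume "x < y"
    then show "inv g x < inv g y" using i2[of x] i2[of y] assms(1)
      by (metis not_less_iff_gr_or_eq strict_mono_less)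
  qed
  have sg: "surj (inv g)" using i1 by (metis surjI)
  have r1: "range g = UNIV" "range (inv g) = UNIV" using assms(2) sg by auto
  have "homeomorphism UNIV UNIV g (inv g)"
    unfolding homeomorphism_def
    using smono_surj_cont[OF assms] smono_surj_cont[OF sm sg] i1 i2 r1 by blast
  then show ?thesis unfolding HomeoPlus_def using assms by blast
qed

lemma int_piece:
  fixes a :: "int \<Rightarrow> real"
  assumes sm: "strict_mono a" and up: "\<And>M. \<exists>n. M < a n" and dn: "\<And>M. \<exists>n. a n \<le> M"
  shows "\<exists>n. a n \<le> u \<and> u < a (n+1)"
proof -
  obtain n0 where n0: "a n0 \<le> u" using dn by blast
  obtain n1 where n1: "u < a n1" using up by blast
  have "n0 < n1" using n0 n1 sm by (metis le_less_trans not_less strict_mono_less)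
  define S where "S = {n. n0 \<le> n \<and> n < n1 \<and> a n \<le> u}"
  have fin: "finite S" unfolding S_def by (rule finite_subset[of _ "{n0..n1}"]) auto
  have ne: "n0 \<in> S" unfolding S_def using n0 \<open>n0 < n1\<close> by auto
  define n where "n = Max S"
  have nS: "n \<in> S" using fin ne n_def Max_in by blast
  have "u < a (n+1)"
  proof (rule ccontr)
    assume "\<not> u < a (n+1)"
    then have "a (n+1) \<le> u" by simp
    moreover have "n + 1 < n1"
    proof (rule ccontr)
      assume "\<not> n + 1 < n1"
      then have "n + 1 = n1" using nS unfolding S_def by auto
      then show False using \<open>a (n+1) \<le> u\<close> n1 by simp
    qed
    ultimately have "n + 1 \<in> S" using nS unfolding S_def by auto
    then show False using fin n_def Max_ge by fastforce
  qed
  then show ?thesis using nS unfolding S_def by auto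
qed

lemma int_piece_unique:
  fixes a :: "int \<Rightarrow> real"
  assumes sm: "strict_mono a" "a n \<le> u" "u < a (n+1)" "a m \<le> u" "u < a (m+1)"
  shows "n = m"
proof (rule ccontr)
  assume "n \<noteq> m"
  then consider "n + 1 \<le> m" | "m + 1 \<le> n" by linarith
  then show False
    by cases (use assms in \<open>auto simp: strict_mono_less_eq[OF sm(1), symmetric]\<close>)
qed

context setting begin

lemma theta_GA_comp:
  assumes "g \<in> GA" "h \<in> GA"
  shows "theta_GA f (ga_comp g h) t = theta_GA f g (theta_GA f h t)"
proof -
  obtain n r m s where g: "g = (n, r)" and h: "h = (m, s)" by fastforce
  have r: "dyadic r" and s: "dyadic s" using assms g h unfolding GA_def by auto
  have "theta_GA f g (theta_GA f h t) = tau r (F n (tau s (F m t)))"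
    by (simp add: theta_GA_eq g h)
  also have "\<dots> = tau r (tau (2 powi n * s) (F n (F m t)))" using tau_F[OF s] by simp
  also have "\<dots> = tau (r + 2 powi n * s) (F (n + m) t)"
    using tau_add[OF r dyadic_powi[OF s]] F_add by simp
  finally show ?thesis by (simp add: theta_GA_eq g h ga_comp_def add.commute)
qed

lemma theta_GA_bar:
  assumes "g \<in> GA" "dyadic x"
  shows "theta_GA f g (dybar f x) = dybar f (GA_app g x)"
proof -
  obtain n r where g: "g = (n, r)" by fastforce
  have r: "dyadic r" using assms g unfolding GA_def by auto
  have "theta_GA f g (dybar f x) = tau r (F n (tau x 0))" by (simp add: theta_GA_eq g dybar_eq)
  also have "\<dots> = tau r (tau (2 powi n * x) 0)" using tau_F[OF assms(2)] by simp
  also have "\<dots> = tau (r + 2 powi n * x) 0" using tau_add[OF r dyadic_powi[OF assms(2)]] by simp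
  finally show ?thesis by (simp add: dybar_eq g GA_app_def add.commute)
qed

lemma theta_GA_sm: "strict_mono (theta_GA f g)"
  using tau_sm F_sm unfolding theta_GA_eq strict_mono_def by simp

lemma theta_GA_less_iff [simp]: "theta_GA f g x < theta_GA f g y \<longleftrightarrow> x < y"
  using theta_GA_sm strict_mono_less by blast
lemma theta_GA_le_iff [simp]: "theta_GA f g x \<le> theta_GA f g y \<longleftrightarrow> x \<le> y"
  using theta_GA_sm strict_mono_less_eq by blast

lemma theta_GA_cont: "continuous_on S (theta_GA f g)"
proof -
  have "continuous_on UNIV (tau (snd g) \<circ> F (fst g))"
    by (intro continuous_on_compose) (auto intro: continuous_on_subset[OF F_cont] continuous_on_subset[OF tau_cont])
  then show ?thesis unfolding theta_GA_eq[abs_def] o_def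
    by (rule continuous_on_subset) simp
qed

end



lemma PL_up: assumes "PL_data h xs gs" shows "\<exists>n. M < xs n"
proof -
  have "filterlim xs at_top at_top" using assms unfolding PL_data_def by blast
  then have "eventually (\<lambda>n. M + 1 \<le> xs n) at_top" unfolding filterlim_at_top by blast
  then obtain N where "\<forall>n\<ge>N. M + 1 \<le> xs n" unfolding eventually_at_top_linorder by blast
  then show ?thesis by (metis dual_order.refl less_add_one order_less_le_trans)
qed

lemma PL_dn: assumes "PL_data h xs gs" shows "\<exists>n. xs n \<le> M"
proof -
  have "filterlim xs at_bot at_bot" using assms unfolding PL_data_def by blast
  then have "eventually (\<lambda>n. xs n \<le> M) at_bot" unfolding filterlim_at_bot by blast
  then obtain N where "\<forall>n\<le>N. xs n \<le> M" unfolding eventually_at_bot_linorder by blast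
  then show ?thesis by blast
qed

lemma PL_dn': assumes "PL_data h xs gs" shows "\<exists>n. xs n < M"
proof -
  obtain n where "xs n \<le> M - 1" using PL_dn[OF assms, of "M - 1"] by blast
  then have "xs n < M" by linarith
  then show ?thesis by blast
qed

lemma PL_sm: "PL_data h xs gs \<Longrightarrow> strict_mono xs" unfolding PL_data_def by blast
lemma PL_dy: "PL_data h xs gs \<Longrightarrow> dyadic (xs n)" unfolding PL_data_def by blast
lemma PL_GA: "PL_data h xs gs \<Longrightarrow> gs n \<in> GA" unfolding PL_data_def by blast
lemma PL_app: "PL_data h xs gs \<Longrightarrow> xs n \<le> y \<Longrightarrow> y \<le> xs (n+1) \<Longrightarrow> h y = GA_app (gs n) y"
  unfolding PL_data_def by auto

lemma PL_piece: assumes "PL_data h xs gs" shows "\<exists>n. xs n \<le> x \<and> x < xs (n+1)"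
  using int_piece[OF PL_sm[OF assms] PL_up[OF assms] PL_dn[OF assms]] .

lemma PL_hxs: assumes "PL_data h xs gs" shows "strict_mono (\<lambda>k. h (xs k))"
proof (rule int_succ_strict_mono)
  fix k
  have "xs k < xs (k+1)" using strict_monoD[OF PL_sm[OF assms], of k "k+1"] by simp
  then show "h (xs k) < h (xs (k+1))"
    using PL_app[OF assms, of k "xs k"] PL_app[OF assms, of k "xs (k+1)"] by simp
qed

lemma PL_h_sm: assumes "PL_data h xs gs" shows "strict_mono h"
proof (rule strict_monoI)
  fix x y :: real assume xy: "x < y"
  obtain n where n: "xs n \<le> x" "x < xs (n+1)" using PL_piece[OF assms] by blast
  obtain m where m: "xs m \<le> y" "y < xs (m+1)" using PL_piece[OF assms] by blast
  have sm: "strict_mono xs" using PL_sm[OF assms] .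
  have "n \<le> m"
  proof (rule ccontr)
    assume "\<not> n \<le> m"
    then have "xs (m+1) \<le> xs n" using sm by (simp add: strict_mono_less_eq)
    then show False using n m xy by linarith
  qed
  show "h x < h y"
  proof (cases "n = m")
    case True
    then show ?thesis using PL_app[OF assms, of n x] PL_app[OF assms, of n y] n m xy by simp
  next
    case False
    then have "n + 1 \<le> m" using \<open>n \<le> m\<close> by simp
    then have "h (xs (n+1)) \<le> h (xs m)" using strict_mono_less_eq[OF PL_hxs[OF assms], of "n+1" m] by simp
    moreover have "h x < h (xs (n+1))"
      using PL_app[OF assms, of n x] PL_app[OF assms, of n "xs (n+1)"] n by simp
    moreover have "h (xs m) \<le> h y"
      using PL_app[OF assms, of m y] PL_app[OF assms, of m "xs m"] m sm
      by (simp add: strict_mono_less_eq)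
    ultimately show ?thesis by simp
  qed
qed

lemma PL2_homeo: "h \<in> PL2 \<Longrightarrow> \<exists>g. homeomorphism UNIV UNIV h g" unfolding PL2_def by blast

lemma PL2_surj: "h \<in> PL2 \<Longrightarrow> surj h"
  using PL2_homeo homeomorphism_def by (metis homeomorphism_imp_open_map top_greatest)
  
lemma finite_idx:
  assumes "PL_data h xs gs" shows "finite {n. a \<le> xs n \<and> xs n \<le> c}"
proof -
  obtain n0 where n0: "xs n0 < a" using PL_dn'[OF assms] by blast
  obtain n1 where n1: "c < xs n1" using PL_up[OF assms] by blast
  have "{n. a \<le> xs n \<and> xs n \<le> c} \<subseteq> {n0..n1}"
    using n0 n1 PL_sm[OF assms]
    by (auto simp: strict_mono_less[symmetric] not_less[symmetric])
  then show ?thesis by (rule finite_subset) simp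
qed

lemma PL_comp:
  assumes h: "h \<in> PL2" "PL_data h xs gs" and g: "g \<in> PL2" "PL_data g ys ds"
  shows "g \<circ> h \<in> PL2"
proof -
  obtain h' where hh: "homeomorphism UNIV UNIV h h'" using PL2_homeo[OF h(1)] by blast
  obtain g' where gg: "homeomorphism UNIV UNIV g g'" using PL2_homeo[OF g(1)] by blast
  have homeo: "homeomorphism UNIV UNIV (g \<circ> h) (h' \<circ> g')" using homeomorphism_compose[OF hh gg] .
  have hsm: "strict_mono h" using PL_h_sm[OF h(2)] .
  define B where "B = range xs \<union> h -` range ys"
  have Bdy: "\<forall>b\<in>B. dyadic b"
  proof
    fix b assume "b \<in> B"
    then consider "b \<in> range xs" | m where "h b = ys m" unfolding B_def by auto
    then show "dyadic b"
    proof cases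
      case 1 then show ?thesis using PL_dy[OF h(2)] by auto
    next
      case 2
      obtain n where n: "xs n \<le> b" "b < xs (n+1)" using PL_piece[OF h(2)] by blast
      then have "h b = GA_app (gs n) b" using PL_app[OF h(2)] by simp
      then have "b = GA_app (ga_inv (gs n)) (ys m)" using 2 ga_inv_app1 by metis
      then show ?thesis using GA_app_dyadic ga_inv_GA PL_GA[OF h(2)] PL_dy[OF g(2)] by metis
    qed
  qed
  have Bfin: "finite (B \<inter> {a..c})" for a c
  proof -
    have "B \<inter> {a..c} \<subseteq> xs ` {n. a \<le> xs n \<and> xs n \<le> c} \<union> h -` (ys ` {m. h a \<le> ys m \<and> ys m \<le> h c})"
    proof
      fix z assume z: "z \<in> B \<inter> {a..c}"
      then consider k where "z = xs k" | k where "h z = ys k" unfolding B_def by auto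
      then show "z \<in> xs ` {n. a \<le> xs n \<and> xs n \<le> c} \<union> h -` (ys ` {m. h a \<le> ys m \<and> ys m \<le> h c})"
      proof cases
        case 1 then show ?thesis using z by auto
      next
        case 2
        have "h a \<le> h z" "h z \<le> h c" using z hsm by (auto simp: strict_mono_less_eq)
        then show ?thesis using 2 by auto
      qed
    qed
    moreover have "finite (h -` (ys ` {m. h a \<le> ys m \<and> ys m \<le> h c}))"
      by (rule finite_vimageI) (use finite_idx[OF g(2)] strict_mono_imp_inj_on hsm in auto)
    ultimately show ?thesis using finite_idx[OF h(2)] by (meson finite_Un finite_imageI finite_subset)
  qed
  have loc: "\<exists>\<gamma>\<in>GA. \<exists>e>0. \<forall>y\<in>ball x e. (g \<circ> h) y = GA_app \<gamma> y" if "x \<notin> B" for x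
  proof -
    obtain n where n: "xs n \<le> x" "x < xs (n+1)" using PL_piece[OF h(2)] by blast
    have n': "xs n < x" using n that unfolding B_def by (metis UnI1 order_le_less rangeI)
    obtain m where m: "ys m \<le> h x" "h x < ys (m+1)" using PL_piece[OF g(2)] by blast
    have m': "ys m < h x" using m that unfolding B_def by (metis UnI2 order_le_less rangeI vimageI)
    define U where "U = {xs n <..< xs (n+1)} \<inter> GA_app (gs n) -` {ys m <..< ys (m+1)}"
    have "open (GA_app (gs n) -` {ys m <..< ys (m+1)})"
      using continuous_on_open_vimage[OF open_UNIV, of "GA_app (gs n)"] GA_app_cont by auto
    then have "open U" unfolding U_def by (intro open_Int) auto
    moreover have "x \<in> U" unfolding U_def using n n' m m' PL_app[OF h(2), of n x] by auto
    ultimately obtain e where e: "e > 0" "ball x e \<subseteq> U" by (meson open_contains_ball)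
    have "(g \<circ> h) y = GA_app (ga_comp (ds m) (gs n)) y" if "y \<in> ball x e" for y
    proof -
      have yU: "y \<in> U" using that e by auto
      then have "h y = GA_app (gs n) y" using PL_app[OF h(2), of n y] unfolding U_def by auto
      moreover have "g (GA_app (gs n) y) = GA_app (ds m) (GA_app (gs n) y)"
        using PL_app[OF g(2), of m] yU unfolding U_def by auto
      ultimately show ?thesis by (simp add: ga_comp_app)
    qed
    then show ?thesis using e ga_comp_GA PL_GA[OF h(2)] PL_GA[OF g(2)] by blast
  qed
  show ?thesis unfolding PL2_def using homeo Bdy Bfin loc by blast
qed




lemma single_piece:
  fixes h :: "real \<Rightarrow> real"
  assumes hc: "continuous_on UNIV h" and ab: "a < b"
    and loc: "\<And>x. x \<in> {a<..<b} \<Longrightarrow> \<exists>\<gamma>\<in>GA. \<exists>e>0. \<forall>y\<in>ball x e. h y = GA_app \<gamma> y"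
  shows "\<exists>\<gamma>\<in>GA. \<forall>y\<in>{a..b}. h y = GA_app \<gamma> y"
proof -
  define S where "S = {a<..<b}"
  define P where "P x \<gamma> \<longleftrightarrow> \<gamma> \<in> GA \<and> (\<exists>e>0. \<forall>y\<in>ball x e. h y = GA_app \<gamma> y)" for x \<gamma>
  define \<phi> where "\<phi> x = (SOME \<gamma>. P x \<gamma>)" for x
  have P\<phi>: "P x (\<phi> x)" if "x \<in> S" for x
  proof -
    from loc[of x] that have "\<exists>\<gamma>. P x \<gamma>" unfolding P_def S_def by blast
    then show ?thesis unfolding \<phi>_def by (rule someI_ex)
  qed
  have "\<phi> constant_on S"
  proof (rule locally_constant_imp_constant)
    show "connected S" unfolding S_def by simp
  next
    fix x assume x: "x \<in> S"
    obtain ex where ex: "ex > 0" "\<forall>y\<in>ball x ex. h y = GA_app (\<phi> x) y"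
      using P\<phi>[OF x] unfolding P_def by blast
    show "\<exists>T. openin (top_of_set S) T \<and> x \<in> T \<and> (\<forall>y\<in>T. \<phi> y = \<phi> x)"
    proof (intro exI conjI ballI)
      show "openin (top_of_set S) (S \<inter> ball x ex)" by (simp add: openin_open_Int)
      show "x \<in> S \<inter> ball x ex" using x ex by simp
    next
      fix y assume y: "y \<in> S \<inter> ball x ex"
      obtain ey where ey: "ey > 0" "\<forall>z\<in>ball y ey. h z = GA_app (\<phi> y) z"
        using P\<phi>[of y] y unfolding P_def by blast
      define d where "d = min ey (ex - dist x y) / 2"
      have d: "d > 0" using ey y unfolding d_def by (simp add: dist_commute)
      have y1: "y \<in> ball x ex" "y \<in> ball y ey" using y ey by auto
      have dd: "d \<le> ey / 2" "d \<le> (ex - dist x y) / 2" unfolding d_def by auto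
      have dxy: "dist x y < ex" using y by auto
      have "dist x (y + d) \<le> dist x y + d" unfolding dist_real_def using d by (simp add: abs_if)
      then have y2: "y + d \<in> ball x ex" "y + d \<in> ball y ey" using dd d dxy ey(1)
        by (auto simp: dist_real_def)
      show "\<phi> y = \<phi> x"
      proof (rule GA_eq[of _ y _ "y + d"])
        show "GA_app (\<phi> y) y = GA_app (\<phi> x) y" using ex(2) ey(2) y1 by metis
        show "GA_app (\<phi> y) (y + d) = GA_app (\<phi> x) (y + d)" using ex(2) ey(2) y2 by metis
      qed (use d in simp)
    qed
  qed
  then obtain \<gamma> where \<gamma>: "\<forall>x\<in>S. \<phi> x = \<gamma>" unfolding constant_on_def by blast
  have mid: "(a + b) / 2 \<in> S" using ab unfolding S_def by auto
  have gGA: "\<gamma> \<in> GA" using P\<phi>[OF mid] \<gamma> mid unfolding P_def by auto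
  have onS: "S \<subseteq> {x. h x = GA_app \<gamma> x}"
  proof
    fix x assume x: "x \<in> S"
    then obtain e where "e > 0" "\<forall>y\<in>ball x e. h y = GA_app (\<phi> x) y" using P\<phi> unfolding P_def by blast
    then show "x \<in> {x. h x = GA_app \<gamma> x}" using \<gamma> x by auto
  qed
  have "closed {x. h x = GA_app \<gamma> x}" by (rule closed_Collect_eq[OF hc GA_app_cont])
  then have "closure S \<subseteq> {x. h x = GA_app \<gamma> x}" using onS closure_minimal by blast
  then show ?thesis using gGA ab unfolding S_def by auto
qed

lemma enumerate:
  fixes C :: "real set"
  assumes fin: "\<And>a c. finite (C \<inter> {a..c})" and ints: "\<And>k::int. of_int k \<in> C"
  shows "\<exists>xs::int \<Rightarrow> real. strict_mono xs \<and> (\<forall>k. xs k \<in> C) \<and> filterlim xs at_top at_top \<and>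
     filterlim xs at_bot at_bot \<and> (\<forall>k. \<forall>c\<in>C. \<not> (xs k < c \<and> c < xs (k+1)))"
proof -
  define nxt where "nxt x = Min {c \<in> C. x < c \<and> c \<le> x + 1}" for x
  define prv where "prv x = Max {c \<in> C. x - 1 \<le> c \<and> c < x}" for x
  have nfin: "finite {c \<in> C. x < c \<and> c \<le> x + 1}" for x
    by (rule finite_subset[OF _ fin[of x "x+1"]]) auto
  have nne: "of_int (\<lfloor>x\<rfloor> + 1) \<in> {c \<in> C. x < c \<and> c \<le> x + 1}" for x
    using ints[of "\<lfloor>x\<rfloor> + 1"] of_int_floor_le[of x] real_of_int_floor_add_one_gt[of x] by simp
  have pfin: "finite {c \<in> C. x - 1 \<le> c \<and> c < x}" for x
    by (rule finite_subset[OF _ fin[of "x - 1" x]]) auto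
  have pne: "of_int (\<lceil>x\<rceil> - 1) \<in> {c \<in> C. x - 1 \<le> c \<and> c < x}" for x
    using ints[of "\<lceil>x\<rceil> - 1"] ceiling_correct[of x] of_int_ceiling_diff_one_le[of x] by simp
  have nxt1: "nxt x \<in> {c \<in> C. x < c \<and> c \<le> x + 1}" for x
    unfolding nxt_def using Min_in[OF nfin] nne by blast
  have nxt2: "nxt x \<le> c" if "c \<in> C" "x < c" for x c
  proof (cases "c \<le> x + 1")
    case True then show ?thesis unfolding nxt_def using that Min_le[OF nfin] by blast
  next
    case False then show ?thesis using nxt1[of x] by auto
  qed
  have prv1: "prv x \<in> {c \<in> C. x - 1 \<le> c \<and> c < x}" for x
    unfolding prv_def using Max_in[OF pfin] pne by blast
  have prv2: "c \<le> prv x" if "c \<in> C" "c < x" for x c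
  proof (cases "x - 1 \<le> c")
    case True then show ?thesis unfolding prv_def using that Max_ge[OF pfin] by blast
  next
    case False then show ?thesis using prv1[of x] by auto
  qed
  define up where "up n = (nxt ^^ n) 0" for n
  define dn where "dn n = (prv ^^ n) 0" for n
  have 0: "(0::real) \<in> C" using ints[of 0] by simp
  have upC: "up n \<in> C" for n by (induction n) (use 0 nxt1 in \<open>auto simp: up_def\<close>)
  have dnC: "dn n \<in> C" for n by (induction n) (use 0 prv1 in \<open>auto simp: dn_def\<close>)
  have upS: "up (Suc n) = nxt (up n)" for n by (simp add: up_def)
  have dnS: "dn (Suc n) = prv (dn n)" for n by (simp add: dn_def)
  have up_sm: "strict_mono up" by (rule strict_mono_Suc_iff[THEN iffD2]) (use upS nxt1 in auto)
  have dn_sm: "strict_mono (\<lambda>n. - dn n)" by (rule strict_mono_Suc_iff[THEN iffD2]) (use dnS prv1 in auto)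
  have up_unb: "\<exists>n. M < up n" for M
  proof (rule ccontr)
    assume "\<not> ?thesis"
    then have "range up \<subseteq> C \<inter> {0..M}" using upC up_sm
      by (auto simp: not_less) (metis strict_mono_less_eq up_def zero_le funpow_0)
    then have "finite (range up)" using fin finite_subset by blast
    moreover have "inj up" using up_sm strict_mono_imp_inj_on by blast
    ultimately show False using finite_imageD by fastforce
  qed
  have dn_unb: "\<exists>n. dn n < M" for M
  proof (rule ccontr)
    assume "\<not> ?thesis"
    then have "range dn \<subseteq> C \<inter> {M..0}" using dnC dn_sm
      by (auto simp: not_less) (metis neg_le_iff_le strict_mono_less_eq dn_def zero_le funpow_0)
    then have "finite (range dn)" using fin finite_subset by blast
    moreover have "inj dn" using dn_sm strict_mono_imp_inj_on by (metis inj_def neg_equal_iff_equal)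
    ultimately show False using finite_imageD by fastforce
  qed
  define xs where "xs k = (if 0 \<le> k then up (nat k) else dn (nat (- k)))" for k :: int
  have xsC: "xs k \<in> C" for k using upC dnC by (simp add: xs_def)
  have step: "xs k < xs (k+1) \<and> (\<forall>c\<in>C. \<not> (xs k < c \<and> c < xs (k+1)))" for k
  proof (cases "0 \<le> k")
    case True
    then have "xs (k+1) = nxt (xs k)" unfolding xs_def using upS[of "nat k"]
      by (simp add: nat_add_distrib)
    moreover have "\<forall>c\<in>C. \<not> (xs k < c \<and> c < nxt (xs k))" using nxt2[of _ "xs k"] by (meson leD)
    ultimately show ?thesis using nxt1[of "xs k"] by simp
  next
    case False
    then have "xs k = prv (xs (k+1))" unfolding xs_def using dnS[of "nat (-(k+1))"]
      by (simp add: Suc_nat_eq_nat_zadd1 up_def dn_def)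
    moreover have "\<forall>c\<in>C. \<not> (prv (xs (k+1)) < c \<and> c < xs (k+1))" using prv2[of _ "xs (k+1)"] by (meson leD)
    ultimately show ?thesis using prv1[of "xs (k+1)"] by simp
  qed
  have sm: "strict_mono xs" by (rule int_succ_strict_mono) (use step in blast)
  have top: "filterlim xs at_top at_top"
    unfolding filterlim_at_top eventually_at_top_linorder
  proof
    fix Z
    obtain n where "Z < up n" using up_unb by blast
    then have "\<forall>k\<ge>int n. Z \<le> xs k"
      using sm by (auto simp: xs_def strict_mono_less_eq[symmetric])
    then show "\<exists>N. \<forall>k\<ge>N. Z \<le> xs k" by blast
  qed
  have bot: "filterlim xs at_bot at_bot"
    unfolding filterlim_at_bot eventually_at_bot_linorder
  proof
    fix Z
    obtain n where "dn n < Z" using dn_unb by blast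
    moreover have "xs (- int n) = dn n" unfolding xs_def by (auto simp: up_def dn_def)
    ultimately have "\<forall>k\<le>- int n. xs k \<le> Z"
      using sm by (metis less_imp_le order.trans strict_mono_less_eq)
    then show "\<exists>N. \<forall>k\<le>N. xs k \<le> Z" by blast
  qed
  show ?thesis using sm xsC top bot step by blast
qed

lemma PL2_data:
  assumes "h \<in> PL2" shows "\<exists>xs gs. PL_data h xs gs"
proof -
  obtain h' where hh: "homeomorphism UNIV UNIV h h'" using assms unfolding PL2_def by blast
  have hc: "continuous_on UNIV h" using hh homeomorphism_def by blast
  obtain B where Bd: "\<forall>b\<in>B. dyadic b" and Bf: "\<forall>a c. finite (B \<inter> {a..c})"
    and Bl: "\<forall>x. x \<notin> B \<longrightarrow> (\<exists>\<gamma>\<in>GA. \<exists>e>0. \<forall>y\<in>ball x e. h y = GA_app \<gamma> y)"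
    using assms unfolding PL2_def by blast
  define C where "C = B \<union> range real_of_int"
  have Cf: "finite (C \<inter> {a..c})" for a c
  proof -
    have "range real_of_int \<inter> {a..c} \<subseteq> real_of_int ` {\<lfloor>a\<rfloor>..\<lceil>c\<rceil>}"
      by (auto simp: floor_le_iff le_ceiling_iff)
    then have "finite (range real_of_int \<inter> {a..c})" by (meson finite_atLeastAtMost_int finite_imageI finite_subset)
    then show ?thesis using Bf unfolding C_def by (simp add: Int_Un_distrib2)
  qed
  obtain xs :: "int \<Rightarrow> real" where sm: "strict_mono xs" and xsC: "\<forall>k. xs k \<in> C" and top: "filterlim xs at_top at_top"
    and bot: "filterlim xs at_bot at_bot" and gap: "\<forall>k. \<forall>c\<in>C. \<not> (xs k < c \<and> c < xs (k+1))"
    using enumerate[of C] Cf unfolding C_def by blast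
  have dy: "dyadic (xs k)" for k using xsC Bd unfolding C_def by auto
  have pc: "\<exists>\<gamma>\<in>GA. \<forall>y\<in>{xs k..xs (k+1)}. h y = GA_app \<gamma> y" for k
  proof (rule single_piece[OF hc])
    show "xs k < xs (k+1)" by (rule strict_monoD[OF sm]) simp
  next
    fix x assume "x \<in> {xs k<..<xs (k+1)}"
    then have "x \<notin> B" using gap unfolding C_def by auto
    then show "\<exists>\<gamma>\<in>GA. \<exists>e>0. \<forall>y\<in>ball x e. h y = GA_app \<gamma> y" using Bl by blast
  qed
  then obtain gs where "\<forall>k. gs k \<in> GA \<and> (\<forall>y\<in>{xs k..xs (k+1)}. h y = GA_app (gs k) y)" by metis
  then have "PL_data h xs gs" unfolding PL_data_def using sm dy top bot by blast
  then show ?thesis by blast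
qed




context setting begin

lemma dybar_max: "dyadic x \<Longrightarrow> dyadic y \<Longrightarrow> dybar f (max x y) = max (dybar f x) (dybar f y)"
  by (auto simp: max_def dybar_le_iff)
lemma dybar_min: "dyadic x \<Longrightarrow> dyadic y \<Longrightarrow> dybar f (min x y) = min (dybar f x) (dybar f y)"
  by (auto simp: min_def dybar_le_iff)

lemma dyadic_max: "dyadic x \<Longrightarrow> dyadic y \<Longrightarrow> dyadic (max x y)" by (simp add: max_def)
lemma dyadic_min: "dyadic x \<Longrightarrow> dyadic y \<Longrightarrow> dyadic (min x y)" by (simp add: min_def)

lemma bar_seq:
  assumes "PL_data h xs gs"
  shows "strict_mono (\<lambda>n. dybar f (xs n))" "\<And>M. \<exists>n. M < dybar f (xs n)" "\<And>M. \<exists>n. dybar f (xs n) \<le> M"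
proof -
  show "strict_mono (\<lambda>n. dybar f (xs n))"
    using strict_monoD[OF PL_sm[OF assms]] PL_dy[OF assms] dybar_less by (simp add: strict_mono_def)
next
  fix M
  obtain n where n: "M + 1 < xs n" using PL_up[OF assms] by blast
  have "of_int \<lfloor>xs n\<rfloor> \<le> dybar f (xs n)" using dybar_floor PL_dy[OF assms] by blast
  moreover have "xs n < of_int \<lfloor>xs n\<rfloor> + 1" by (rule real_of_int_floor_add_one_gt)
  ultimately have "M < dybar f (xs n)" using n by linarith
  then show "\<exists>n. M < dybar f (xs n)" by blast
next
  fix M
  obtain n where n: "xs n \<le> M - 1" using PL_dn[OF assms] by blast
  have "dybar f (xs n) \<le> of_int \<lceil>xs n\<rceil>" using dybar_ceil PL_dy[OF assms] by blast
  moreover have "of_int \<lceil>xs n\<rceil> \<le> xs n + 1" by (rule of_int_ceiling_le_add_one)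
  ultimately have "dybar f (xs n) \<le> M" using n by linarith
  then show "\<exists>n. dybar f (xs n) \<le> M" by blast
qed

lemma thetaPL_piece:
  assumes "h \<in> PL2"
  shows "\<exists>xs gs. PL_data h xs gs \<and> (\<forall>t. \<exists>n. dybar f (xs n) \<le> t \<and> t < dybar f (xs (n+1)) \<and>
           theta_PL f h t = theta_GA f (gs n) t)"
proof -
  define d where "d = (SOME d. PL_data h (fst d) (snd d))"
  obtain xs gs where d2: "d = (xs, gs)" by fastforce
  have "PL_data h (fst d) (snd d)" unfolding d_def
    by (rule someI_ex) (use PL2_data[OF assms] in auto)
  then have pd: "PL_data h xs gs" using d2 by simp
  have "\<exists>n. dybar f (xs n) \<le> t \<and> t < dybar f (xs (n+1)) \<and> theta_PL f h t = theta_GA f (gs n) t" for t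
  proof -
    obtain n where n: "dybar f (xs n) \<le> t" "t < dybar f (xs (n+1))"
      using int_piece[OF bar_seq[OF pd]] by blast
    have "(SOME n. dybar f (xs n) \<le> t \<and> t < dybar f (xs (n + 1))) = n"
    proof (rule some_equality)
      show "dybar f (xs n) \<le> t \<and> t < dybar f (xs (n + 1))" using n by simp
    next
      fix m assume "dybar f (xs m) \<le> t \<and> t < dybar f (xs (m + 1))"
      then show "m = n" using int_piece_unique[OF bar_seq(1)[OF pd]] n by blast
    qed
    then have "theta_PL f h t = theta_GA f (gs n) t"
      unfolding theta_PL_def d_def[symmetric] d2 by simp
    then show ?thesis using n by blast
  qed
  then show ?thesis using pd by blast
qed

lemma local_eval:
  assumes h: "h \<in> PL2" and ab: "dyadic a" "dyadic b" and g: "\<gamma> \<in> GA"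
    and on: "\<forall>y\<in>{a..b}. h y = GA_app \<gamma> y" and t: "dybar f a \<le> t" "t \<le> dybar f b"
  shows "theta_PL f h t = theta_GA f \<gamma> t"
proof -
  obtain xs gs where pd: "PL_data h xs gs" and pc: "\<forall>t. \<exists>n. dybar f (xs n) \<le> t \<and> t < dybar f (xs (n+1)) \<and>
           theta_PL f h t = theta_GA f (gs n) t" using thetaPL_piece[OF h] by blast
  obtain n where n: "dybar f (xs n) \<le> t" "t < dybar f (xs (n+1))" "theta_PL f h t = theta_GA f (gs n) t"
    using pc by blast
  define c where "c = max (xs n) a"
  define d where "d = min (xs (n+1)) b"
  have cd: "dyadic c" "dyadic d" unfolding c_def d_def using ab PL_dy[OF pd] dyadic_max dyadic_min by auto
  have tc: "dybar f c \<le> t" unfolding c_def using dybar_max ab PL_dy[OF pd] n t by simp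
  have td: "t \<le> dybar f d" unfolding d_def using dybar_min ab PL_dy[OF pd] n t by simp
  have "c \<le> d" using tc td cd dybar_le_iff by (meson order.trans)
  have on1: "h y = GA_app \<gamma> y" "h y = GA_app (gs n) y" if "c \<le> y" "y \<le> d" for y
    using on that PL_app[OF pd, of n y] unfolding c_def d_def by auto
  show ?thesis
  proof (cases "c = d")
    case True
    then have tt: "t = dybar f c" using tc td by simp
    have "theta_GA f (gs n) t = dybar f (GA_app (gs n) c)" using theta_GA_bar PL_GA[OF pd] cd tt by simp
    also have "\<dots> = dybar f (GA_app \<gamma> c)" using on1[of c] True by simp
    also have "\<dots> = theta_GA f \<gamma> t" using theta_GA_bar g cd tt by simp
    finally show ?thesis using n by simp
  next
    case False
    then have "c < d" using \<open>c \<le> d\<close> by simp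
    then have "gs n = \<gamma>" using GA_eq[of "gs n" c \<gamma> d] on1 \<open>c \<le> d\<close> by simp
    then show ?thesis using n by simp
  qed
qed

lemma hxs_dy: assumes pd: "PL_data h xs gs" shows "dyadic (h (xs k))"
proof -
  have "xs k < xs (k+1)" by (rule strict_monoD[OF PL_sm[OF pd]]) simp
  then have "h (xs k) = GA_app (gs k) (xs k)" using PL_app[OF pd, of k "xs k"] by simp
  then show ?thesis using GA_app_dyadic[OF PL_GA[OF pd] PL_dy[OF pd]] by simp
qed

lemma theta_homeo:
  assumes h: "h \<in> PL2" shows "theta_PL f h \<in> HomeoPlus"
proof -
  obtain xs gs where pd: "PL_data h xs gs" and pc: "\<forall>t. \<exists>n. dybar f (xs n) \<le> t \<and> t < dybar f (xs (n+1)) \<and>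
           theta_PL f h t = theta_GA f (gs n) t" using thetaPL_piece[OF h] by blast
  let ?X = "\<lambda>n. dybar f (xs n)"
  let ?T = "theta_PL f h"
  have sx: "xs n < xs (n+1)" for n using strict_monoD[OF PL_sm[OF pd], of n "n+1"] by simp
  have closed: "?T t = theta_GA f (gs n) t" if "?X n \<le> t" "t \<le> ?X (n+1)" for n t
    by (rule local_eval[OF h PL_dy[OF pd] PL_dy[OF pd] PL_GA[OF pd]]) (use that PL_app[OF pd] in auto)
  have atX: "theta_GA f (gs n) (?X n) = dybar f (h (xs n))" "theta_GA f (gs n) (?X (n+1)) = dybar f (h (xs (n+1)))" for n
    using theta_GA_bar[OF PL_GA[OF pd] PL_dy[OF pd]] PL_app[OF pd, of n "xs n"] PL_app[OF pd, of n "xs (n+1)"] sx[of n] by auto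
  have H_sm: "strict_mono (\<lambda>n. dybar f (h (xs n)))"
    using strict_monoD[OF PL_hxs[OF pd]] hxs_dy[OF pd] dybar_less by (simp add: strict_mono_def)
  have sm: "strict_mono ?T"
  proof (rule strict_monoI)
    fix s t :: real assume st: "s < t"
    obtain m where m: "?X m \<le> s" "s < ?X (m+1)" "?T s = theta_GA f (gs m) s" using pc by blast
    obtain n where n: "?X n \<le> t" "t < ?X (n+1)" "?T t = theta_GA f (gs n) t" using pc by blast
    have "m \<le> n"
    proof (rule ccontr)
      assume "\<not> m \<le> n"
      then have "?X (n+1) \<le> ?X m" using strict_mono_less_eq[OF bar_seq(1)[OF pd], of "n+1" m] by simp
      then show False using m n st by linarith
    qed
    show "?T s < ?T t"
    proof (cases "m = n")
      case True then show ?thesis using m n st by simp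
    next
      case False
      then have "m + 1 \<le> n" using \<open>m \<le> n\<close> by simp
      then have "dybar f (h (xs (m+1))) \<le> dybar f (h (xs n))" using strict_mono_less_eq[OF H_sm, of "m+1" n] by simp
      moreover have "theta_GA f (gs m) s < theta_GA f (gs m) (?X (m+1))" using m(2) by simp
      then have "?T s < dybar f (h (xs (m+1)))" using m(3) atX(2)[of m] by simp
      moreover have "theta_GA f (gs n) (?X n) \<le> theta_GA f (gs n) t" using n(1) by simp
      then have "dybar f (h (xs n)) \<le> ?T t" using n(3) atX(1)[of n] by simp
      ultimately show ?thesis by simp
    qed
  qed
  have hsm: "strict_mono h" using PL_h_sm[OF pd] .
  have hs: "surj h" using PL2_surj[OF h] .
  have Hup: "\<exists>n. M < dybar f (h (xs n))" for M
  proof -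
    obtain z where z: "M + 1 = h z" using surjD[OF hs] by blast
    obtain n where "z < xs n" using PL_up[OF pd] by blast
    then have "h z < h (xs n)" by (rule strict_monoD[OF hsm])
    then have "M + 1 < h (xs n)" using z by simp
    moreover have "of_int \<lfloor>h (xs n)\<rfloor> \<le> dybar f (h (xs n))" using dybar_floor hxs_dy[OF pd] by blast
    moreover have "h (xs n) < of_int \<lfloor>h (xs n)\<rfloor> + 1" by (rule real_of_int_floor_add_one_gt)
    ultimately have "M < dybar f (h (xs n))" by linarith
    then show ?thesis by blast
  qed
  have Hdn: "\<exists>n. dybar f (h (xs n)) \<le> M" for M
  proof -
    obtain z where z: "M - 1 = h z" using surjD[OF hs] by blast
    obtain n where "xs n < z" using PL_dn'[OF pd] by blast
    then have "h (xs n) < h z" by (rule strict_monoD[OF hsm])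
    then have "h (xs n) < M - 1" using z by simp
    moreover have "dybar f (h (xs n)) \<le> of_int \<lceil>h (xs n)\<rceil>" using dybar_ceil hxs_dy[OF pd] by blast
    moreover have "of_int \<lceil>h (xs n)\<rceil> \<le> h (xs n) + 1" by (rule of_int_ceiling_le_add_one)
    ultimately have "dybar f (h (xs n)) \<le> M" by linarith
    then show ?thesis by blast
  qed
  have surj: "surj ?T"
  proof (rule surjI[where f="\<lambda>u. SOME t. ?T t = u"], rule someI_ex)
    fix u
    obtain n where n: "dybar f (h (xs n)) \<le> u" "u < dybar f (h (xs (n+1)))"
      using int_piece[OF H_sm Hup Hdn] by blast
    have "?X n \<le> ?X (n+1)" using strict_mono_less_eq[OF bar_seq(1)[OF pd], of n "n+1"] by simp
    then obtain t where t: "?X n \<le> t" "t \<le> ?X (n+1)" "theta_GA f (gs n) t = u"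
      using IVT'[of "theta_GA f (gs n)" "?X n" u "?X (n+1)"] atX[of n] n theta_GA_cont by auto
    then have "?T t = u" using closed[of n t] by simp
    then show "\<exists>t. ?T t = u" by blast
  qed
  show ?thesis using smono_surj_homeo[OF sm surj] .
qed

lemma theta_hom:
  assumes g: "g \<in> PL2" and h: "h \<in> PL2"
  shows "theta_PL f (g \<circ> h) t = theta_PL f g (theta_PL f h t)"
proof -
  obtain xs gs where pd: "PL_data h xs gs" and pc: "\<forall>t. \<exists>n. dybar f (xs n) \<le> t \<and> t < dybar f (xs (n+1)) \<and>
           theta_PL f h t = theta_GA f (gs n) t" using thetaPL_piece[OF h] by blast
  obtain ys ds where pdg: "PL_data g ys ds" and pcg: "\<forall>t. \<exists>n. dybar f (ys n) \<le> t \<and> t < dybar f (ys (n+1)) \<and>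
           theta_PL f g t = theta_GA f (ds n) t" using thetaPL_piece[OF g] by blast
  obtain n where n: "dybar f (xs n) \<le> t" "t < dybar f (xs (n+1))" "theta_PL f h t = theta_GA f (gs n) t"
    using pc by blast
  define \<gamma> where "\<gamma> = gs n"
  define u where "u = theta_GA f \<gamma> t"
  obtain m where m: "dybar f (ys m) \<le> u" "u < dybar f (ys (m+1))" "theta_PL f g u = theta_GA f (ds m) u"
    using pcg by blast
  define \<delta> where "\<delta> = ds m"
  have gG: "\<gamma> \<in> GA" "\<delta> \<in> GA" unfolding \<gamma>_def \<delta>_def using PL_GA pd pdg by auto
  define a where "a = xs n"
  define b where "b = xs (n+1)"
  define c where "c = ys m"
  define d where "d = ys (m+1)"
  have dys: "dyadic a" "dyadic b" "dyadic c" "dyadic d" unfolding a_def b_def c_def d_def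
    using PL_dy pd pdg by auto
  define a' where "a' = max a (GA_app (ga_inv \<gamma>) c)"
  define b' where "b' = min b (GA_app (ga_inv \<gamma>) d)"
  have dyi: "dyadic (GA_app (ga_inv \<gamma>) c)" "dyadic (GA_app (ga_inv \<gamma>) d)"
    using GA_app_dyadic ga_inv_GA gG dys by auto
  have dy': "dyadic a'" "dyadic b'" unfolding a'_def b'_def using dyi dys dyadic_max dyadic_min by auto
  have bc: "dybar f (GA_app (ga_inv \<gamma>) c) \<le> t"
  proof -
    have "theta_GA f \<gamma> (dybar f (GA_app (ga_inv \<gamma>) c)) = dybar f c"
      using theta_GA_bar[OF gG(1) dyi(1)] ga_inv_app2 by simp
    then have "theta_GA f \<gamma> (dybar f (GA_app (ga_inv \<gamma>) c)) \<le> theta_GA f \<gamma> t"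
      using m(1) unfolding u_def c_def by simp
    then show ?thesis by simp
  qed
  have bd: "t \<le> dybar f (GA_app (ga_inv \<gamma>) d)"
  proof -
    have "theta_GA f \<gamma> (dybar f (GA_app (ga_inv \<gamma>) d)) = dybar f d"
      using theta_GA_bar[OF gG(1) dyi(2)] ga_inv_app2 by simp
    then have "theta_GA f \<gamma> t < theta_GA f \<gamma> (dybar f (GA_app (ga_inv \<gamma>) d))"
      using m(2) unfolding u_def d_def by simp
    then show ?thesis by simp
  qed
  have ta: "dybar f a' \<le> t" unfolding a'_def using dybar_max dys dyi bc n unfolding a_def by simp
  have tb: "t \<le> dybar f b'" unfolding b'_def using dybar_min dys dyi bd n unfolding b_def by simp
  have on: "\<forall>y\<in>{a'..b'}. (g \<circ> h) y = GA_app (ga_comp \<delta> \<gamma>) y"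
  proof
    fix y assume y: "y \<in> {a'..b'}"
    have hy: "h y = GA_app \<gamma> y" using PL_app[OF pd, of n y] y unfolding a'_def b'_def a_def b_def \<gamma>_def by simp
    have "GA_app (ga_inv \<gamma>) c \<le> y" using y unfolding a'_def by simp
    then have "GA_app \<gamma> (GA_app (ga_inv \<gamma>) c) \<le> GA_app \<gamma> y" by simp
    then have "c \<le> GA_app \<gamma> y" using ga_inv_app2[of \<gamma> c] by simp
    moreover have "y \<le> GA_app (ga_inv \<gamma>) d" using y unfolding b'_def by simp
    then have "GA_app \<gamma> y \<le> GA_app \<gamma> (GA_app (ga_inv \<gamma>) d)" by simp
    then have "GA_app \<gamma> y \<le> d" using ga_inv_app2[of \<gamma> d] by simp
    ultimately have "g (GA_app \<gamma> y) = GA_app \<delta> (GA_app \<gamma> y)"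
      using PL_app[OF pdg, of m] unfolding c_def d_def \<delta>_def by simp
    then show "(g \<circ> h) y = GA_app (ga_comp \<delta> \<gamma>) y" using hy by (simp add: ga_comp_app)
  qed
  have gh: "g \<circ> h \<in> PL2" using PL_comp[OF h pd g pdg] .
  have "theta_PL f (g \<circ> h) t = theta_GA f (ga_comp \<delta> \<gamma>) t"
    by (rule local_eval[OF gh dy' ga_comp_GA[OF gG(2) gG(1)] on ta tb])
  also have "\<dots> = theta_GA f \<delta> u" using theta_GA_comp[OF gG(2) gG(1)] unfolding u_def by simp
  also have "\<dots> = theta_PL f g (theta_PL f h t)" using m n unfolding \<delta>_def u_def \<gamma>_def by simp
  finally show ?thesis .
qed

end

theorem mainTheorem6:
  fixes f :: "real \<Rightarrow> real"
  assumes "f \<in> HomeoPlus"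
    and "\<And>x. f (x + 1) = f x + 2"
    and "f 0 = 0"
  shows "(\<forall>h\<in>PL2. theta_PL f h \<in> HomeoPlus) \<and>
         (\<forall>g\<in>PL2. \<forall>h\<in>PL2. theta_PL f (g \<circ> h) = theta_PL f g \<circ> theta_PL f h)"
proof -
  interpret setting f using assms by unfold_locales auto
  show ?thesis using theta_homeo theta_hom by (auto simp: fun_eq_iff)
qed


end
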